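(* Let $(Y_i, D_i, W_i)_{i=1}^N$ be i.i.d. draws from a distribution $P$, with $T_i = [1, D_i^\top]^\top$, $Z_i = [1,W_i^\top]^\top$, and $Y_i = T_i^\top\theta + U_i$ with $\mathbb{E}[U_i\mid W_i]=0$. Let $N=2n$, let $S_1,S_2$ partition $\{1,\dots,N\}$ into halves of size $n$ with $S_{-1}=S_2$, $S_{-2}=S_1$, let $\hat\Upsilon^{(j)}$ be a function estimated only from the data in $S_{-j}$, and set $\hat\Upsilon(Z_i) = \hat\Upsilon^{(j)}(Z_i)$ for $i\in S_j$. Assume: (1) there is a measurable $\Upsilon$ with $\mathbb{E}\|\hat\Upsilon^{(j)}(Z)-\Upsilon(Z)\|^2\to 0$ for $j=1,2$ (expectation over both $\hat\Upsilon^{(j)}$ and an independent draw $Z$); and (3) for some $\epsilon>0$, $\mathbb{E}|U|^{2+\epsilon}<\infty$, $\mathbb{E}\|U\Upsilon(Z)\|^{2+\epsilon}<\infty$, $\mathbb{E}\|T\|^2<\infty$, $\Omega = \mathbb{E}[U^2\Upsilon(Z)\Upsilon(Z)^\top]$ exists, and $\mathbb{E}[U^2\mid Z] < M$ a.s. for some $M<\infty$. Then $$\frac1N\sum_{i=1}^N\hat\Upsilon(Z_i)T_i^\top = \frac1N\sum_{i=1}^N\Upsilon(Z_i)T_i^\top + o_p(1),\qquad \frac{1}{\sqrt N}\sum_{i=1}^N\hat\Upsilon(Z_i)U_i = \frac1{\sqrt N}\sum_{i=1}^N\Upsilon(Z_i)U_i + o_p(1).$$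
   Context: $o_p(1)$ denotes a term converging to zero in probability as $N\to\infty$; $\|\cdot\|$ is the Euclidean norm. *)

theory Defs
  imports "HOL-Probability.Probability"
begin

definition aug :: "real^'n \<Rightarrow> real^('n option)" where
  "aug x = (\<chi> i. case i of None \<Rightarrow> 1 | Some j \<Rightarrow> x $ j)"

definition outer :: "real^'k \<Rightarrow> real^'t \<Rightarrow> real^'t^'k" where
  "outer v t = (\<chi> r c. v $ r * t $ c)"

definition op1 :: "'a measure \<Rightarrow> (nat \<Rightarrow> 'a \<Rightarrow> 'b::real_normed_vector) \<Rightarrow> bool" where
  "op1 M X \<longleftrightarrow> (\<forall>n. X n \<in> borel_measurable M) \<and>
     (\<forall>e>0. (\<lambda>n. measure M {\<omega> \<in> space M. e < norm (X n \<omega>)}) \<longlonglongrightarrow> 0)"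

end

theory Submission
  imports Defs
begin


definition uf :: "real^('d option) \<Rightarrow> real \<times> (real^'d) \<times> (real^'w) \<Rightarrow> real" where
  "uf th p = fst p - aug (fst (snd p)) \<bullet> th"
definition zf :: "real \<times> (real^'d) \<times> (real^'w) \<Rightarrow> real^('w option)" where
  "zf p = aug (snd (snd p))"
definition tf :: "real \<times> (real^'d) \<times> (real^'w) \<Rightarrow> real^('d option)" where
  "tf p = aug (fst (snd p))"

definition wf :: "real \<times> (real^'d) \<times> (real^'w) \<Rightarrow> real^'w" where
  "wf p = snd (snd p)"

lemma aug_cont: "continuous_on UNIV aug"
  unfolding aug_def
proof (intro continuous_on_vec_lambda)
  fix i :: "'a option"
  show "continuous_on UNIV (\<lambda>x. case i of None \<Rightarrow> 1 | Some j \<Rightarrow> x $ j)"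
    by (cases i) (auto intro!: continuous_intros)
qed

lemma aug_meas[measurable]: "aug \<in> borel_measurable borel"
  using aug_cont borel_measurable_continuous_onI by blast

lemma uf_meas[measurable]: "uf th \<in> borel_measurable borel"
  unfolding uf_def
  by (intro borel_measurable_continuous_onI continuous_on_diff continuous_on_inner continuous_on_fst
      continuous_on_snd continuous_on_compose2[OF aug_cont] continuous_on_id continuous_on_const) auto
lemma zf_meas[measurable]: "zf \<in> borel_measurable borel"
  unfolding zf_def
  by (intro borel_measurable_continuous_onI continuous_on_fst
      continuous_on_snd continuous_on_compose2[OF aug_cont] continuous_on_id) auto
lemma tf_meas[measurable]: "tf \<in> borel_measurable borel"
  unfolding tf_def
  by (intro borel_measurable_continuous_onI continuous_on_fst
      continuous_on_snd continuous_on_compose2[OF aug_cont] continuous_on_id) auto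

lemma wf_meas[measurable]: "wf \<in> borel_measurable borel"
  unfolding wf_def
  by (intro borel_measurable_continuous_onI continuous_on_snd continuous_on_id)

locale L = prob_space M for M :: "'a measure" +
  fixes X :: "nat \<Rightarrow> 'a \<Rightarrow> real \<times> (real^'d) \<times> (real^'w)" and th :: "real^('d option)" and Mb :: real
  assumes Xmeas[measurable]: "\<And>i. X i \<in> borel_measurable M"
    and indep: "indep_vars (\<lambda>_. borel) X UNIV"
    and ident: "\<And>i. distr M borel (X i) = distr M borel (X 0)"
    and ce0: "AE \<omega> in M. real_cond_exp M (vimage_algebra (space M) (\<lambda>\<omega>. wf (X 0 \<omega>)) borel) (\<lambda>\<omega>. uf th (X 0 \<omega>)) \<omega> = 0"
    and U2int: "integrable M (\<lambda>\<omega>. (uf th (X 0 \<omega>))\<^sup>2)"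
    and ceb: "AE \<omega> in M. real_cond_exp M (vimage_algebra (space M) (\<lambda>\<omega>. zf (X 0 \<omega>)) borel) (\<lambda>\<omega>. (uf th (X 0 \<omega>))\<^sup>2) \<omega> < Mb"
begin

lemma subalg_vimage:
  assumes [measurable]: "f \<in> measurable M N"
  shows "subalgebra M (vimage_algebra (space M) f N)"
  unfolding subalgebra_def
proof
  show "space (vimage_algebra (space M) f N) = space M" by simp
  have "f \<in> space M \<rightarrow> space N" using measurable_space[OF assms] by auto
  then show "sets (vimage_algebra (space M) f N) \<subseteq> sets M"
    by (auto simp: sets_vimage_algebra2 intro: measurable_sets[OF assms])
qed

lemma sfs_vimage:
  assumes "f \<in> measurable M N"
  shows "sigma_finite_subalgebra M (vimage_algebra (space M) f N)"
  apply (rule finite_measure_subalgebra_is_sigma_finite)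
  unfolding finite_measure_subalgebra_def finite_measure_subalgebra_axioms_def
  using subalg_vimage[OF assms] finite_measure_axioms by blast

lemma meas_vimage:
  assumes "f \<in> measurable M N" "h \<in> measurable N K"
  shows "(\<lambda>\<omega>. h (f \<omega>)) \<in> measurable (vimage_algebra (space M) f N) K"
proof -
  have "f \<in> measurable (vimage_algebra (space M) f N) N"
    by (rule measurable_vimage_algebra1) (use measurable_space[OF assms(1)] in auto)
  then show ?thesis using assms(2) by (rule measurable_compose)
qed

abbreviation "U0 \<equiv> (\<lambda>\<omega>. uf th (X 0 \<omega>))"

lemma I1:
  fixes f :: "real^('w option) \<Rightarrow> ennreal"
  assumes fm[measurable]: "f \<in> borel_measurable borel"
  shows "(\<integral>\<^sup>+\<omega>. ennreal ((U0 \<omega>)\<^sup>2) * f (zf (X 0 \<omega>)) \<partial>M) \<le> ennreal Mb * (\<integral>\<^sup>+\<omega>. f (zf (X 0 \<omega>)) \<partial>M)"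
proof -
  define F where "F = vimage_algebra (space M) (\<lambda>\<omega>. zf (X 0 \<omega>)) borel"
  have zm: "(\<lambda>\<omega>. zf (X 0 \<omega>)) \<in> measurable M borel" by measurable
  interpret S: sigma_finite_subalgebra M F unfolding F_def by (rule sfs_vimage[OF zm])
  have fF: "(\<lambda>\<omega>. f (zf (X 0 \<omega>))) \<in> borel_measurable F"
    unfolding F_def by (rule meas_vimage[OF zm fm])
  define g where "g = (\<lambda>\<omega>. ennreal ((U0 \<omega>)\<^sup>2))"
  have gm[measurable]: "g \<in> borel_measurable M" unfolding g_def by measurable
  have intg: "(\<integral>\<^sup>+\<omega>. f (zf (X 0 \<omega>)) * nn_cond_exp M F g \<omega> \<partial>M) = (\<integral>\<^sup>+\<omega>. f (zf (X 0 \<omega>)) * g \<omega> \<partial>M)"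
    by (rule S.nn_cond_exp_intg[OF fF gm])
  have a1: "AE \<omega> in M. nn_cond_exp M F (\<lambda>\<omega>. ennreal (- (U0 \<omega>)\<^sup>2)) \<omega> = 0"
  proof -
    have "(\<lambda>\<omega>. ennreal (- (U0 \<omega>)\<^sup>2)) = (\<lambda>\<omega>. 0)" by (auto simp: ennreal_neg)
    moreover have "AE x in M. nn_cond_exp M F (\<lambda>x. 0) x = 0"
      using S.nn_cond_exp_F_meas[of "\<lambda>x. 0"] by (auto elim!: eventually_mono)
    ultimately show ?thesis by simp
  qed
  have a2: "AE \<omega> in M. nn_cond_exp M F g \<omega> \<noteq> \<infinity>"
  proof (rule nn_integral_PInf_AE)
    show "nn_cond_exp M F g \<in> borel_measurable M" by measurable
    have "(\<integral>\<^sup>+\<omega>. nn_cond_exp M F g \<omega> \<partial>M) = (\<integral>\<^sup>+\<omega>. 1 * nn_cond_exp M F g \<omega> \<partial>M)" by simp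
    also have "\<dots> = (\<integral>\<^sup>+\<omega>. 1 * g \<omega> \<partial>M)" by (rule S.nn_cond_exp_intg) auto
    also have "\<dots> = (\<integral>\<^sup>+\<omega>. ennreal ((U0 \<omega>)\<^sup>2) \<partial>M)" by (simp add: g_def)
    also have "\<dots> < \<infinity>" using U2int by (simp add: integrable_iff_bounded)
    finally show "(\<integral>\<^sup>+\<omega>. nn_cond_exp M F g \<omega> \<partial>M) \<noteq> \<infinity>" by simp
  qed
  have ab: "AE \<omega> in M. nn_cond_exp M F g \<omega> \<le> ennreal Mb"
    using a1 a2 ceb
  proof eventually_elim
    case (elim \<omega>)
    have "real_cond_exp M F (\<lambda>\<omega>. (U0 \<omega>)\<^sup>2) \<omega> = enn2real (nn_cond_exp M F g \<omega>)"
      using elim(1) unfolding real_cond_exp_def g_def by simp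
    then have "enn2real (nn_cond_exp M F g \<omega>) < Mb" using elim(3) unfolding F_def by simp
    then have "ennreal (enn2real (nn_cond_exp M F g \<omega>)) \<le> ennreal Mb"
      by (intro ennreal_leI) simp
    moreover have "ennreal (enn2real (nn_cond_exp M F g \<omega>)) = nn_cond_exp M F g \<omega>"
      using elim(2) by (simp add: ennreal_enn2real_if)
    ultimately show ?case by simp
  qed
  have "(\<integral>\<^sup>+\<omega>. ennreal ((U0 \<omega>)\<^sup>2) * f (zf (X 0 \<omega>)) \<partial>M) = (\<integral>\<^sup>+\<omega>. f (zf (X 0 \<omega>)) * nn_cond_exp M F g \<omega> \<partial>M)"
    using intg by (simp add: g_def mult.commute)
  also have "\<dots> \<le> (\<integral>\<^sup>+\<omega>. ennreal Mb * f (zf (X 0 \<omega>)) \<partial>M)"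
    using ab by (intro nn_integral_mono_AE) (auto simp: mult.commute intro: mult_right_mono elim!: eventually_mono)
  also have "\<dots> = ennreal Mb * (\<integral>\<^sup>+\<omega>. f (zf (X 0 \<omega>)) \<partial>M)"
    by (rule nn_integral_cmult) measurable
  finally show ?thesis .
qed

lemma I2:
  fixes h :: "real^'w \<Rightarrow> real"
  assumes hm[measurable]: "h \<in> borel_measurable borel"
    and int: "integrable M (\<lambda>\<omega>. h (wf (X 0 \<omega>)) * U0 \<omega>)"
  shows "(\<integral>\<omega>. h (wf (X 0 \<omega>)) * U0 \<omega> \<partial>M) = 0"
proof -
  define F where "F = vimage_algebra (space M) (\<lambda>\<omega>. wf (X 0 \<omega>)) borel"
  have wm: "(\<lambda>\<omega>. wf (X 0 \<omega>)) \<in> measurable M borel" by measurable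
  interpret S: sigma_finite_subalgebra M F unfolding F_def by (rule sfs_vimage[OF wm])
  have hF: "(\<lambda>\<omega>. h (wf (X 0 \<omega>))) \<in> borel_measurable F"
    unfolding F_def by (rule meas_vimage[OF wm hm])
  have "(\<integral>\<omega>. h (wf (X 0 \<omega>)) * U0 \<omega> \<partial>M) = (\<integral>\<omega>. h (wf (X 0 \<omega>)) * real_cond_exp M F U0 \<omega> \<partial>M)"
    by (rule S.real_cond_exp_intg(2)[symmetric, OF int hF]) measurable
  also have "\<dots> = (\<integral>\<omega>. 0 \<partial>M)"
    using ce0 unfolding F_def by (intro integral_cong_AE) (auto elim!: eventually_mono)
  finally show ?thesis by simp
qed


definition R :: "nat set \<Rightarrow> 'a \<Rightarrow> nat \<Rightarrow> real \<times> (real^'d) \<times> (real^'w)" where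
  "R K \<omega> = restrict (\<lambda>k. X k \<omega>) K"
definition Q :: "nat set \<Rightarrow> (nat \<Rightarrow> real \<times> (real^'d) \<times> (real^'w)) measure" where
  "Q K = distr M (PiM K (\<lambda>_. borel)) (R K)"
definition P :: "(real \<times> (real^'d) \<times> (real^'w)) measure" where
  "P = distr M borel (X 0)"

lemma R_meas[measurable]: "R K \<in> measurable M (PiM K (\<lambda>_. borel))"
  unfolding R_def by (intro measurable_restrict) auto

lemma indep_R:
  assumes "i \<notin> K"
  shows "indep_var (PiM K (\<lambda>_. borel)) (R K) (PiM {i} (\<lambda>_. borel)) (R {i})"
  unfolding R_def[abs_def] by (rule indep_var_restrict[OF indep]) (use assms in auto)

lemma PQ_prob: "prob_space P" "prob_space (Q K)"
  unfolding P_def Q_def by (auto intro!: prob_space_distr)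

lemma Qi_P: "distr (Q {i}) borel (\<lambda>f. f i) = P"
proof -
  have "distr (Q {i}) borel (\<lambda>f. f i) = distr M borel (\<lambda>\<omega>. R {i} \<omega> i)"
    unfolding Q_def by (subst distr_distr) (auto intro: measurable_component_singleton simp: comp_def)
  also have "\<dots> = distr M borel (X i)" by (simp add: R_def)
  finally show ?thesis using ident[of i] by (simp add: P_def)
qed

lemma distr_pair:
  assumes "i \<notin> K"
  shows "distr M (PiM K (\<lambda>_. borel) \<Otimes>\<^sub>M PiM {i} (\<lambda>_. borel)) (\<lambda>\<omega>. (R K \<omega>, R {i} \<omega>)) = Q K \<Otimes>\<^sub>M Q {i}"
proof -
  note h = indep_var_distribution_eq[THEN iffD1, OF indep_R[OF assms]]
  then show ?thesis unfolding Q_def by (elim conjE) (rule sym)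
qed

lemma blk_nn:
  fixes G :: "((nat \<Rightarrow> real \<times> (real^'d) \<times> (real^'w)) \<times> (real \<times> (real^'d) \<times> (real^'w))) \<Rightarrow> ennreal"
  assumes "i \<notin> K" and Gm[measurable]: "G \<in> borel_measurable (PiM K (\<lambda>_. borel) \<Otimes>\<^sub>M borel)"
  shows "(\<integral>\<^sup>+\<omega>. G (R K \<omega>, X i \<omega>) \<partial>M) = (\<integral>\<^sup>+v. (\<integral>\<^sup>+x. G (v, x) \<partial>P) \<partial>Q K)"
proof -
  interpret PP: prob_space "Q {i}" by (rule PQ_prob)
  interpret QQ: prob_space "Q K" by (rule PQ_prob)
  interpret pair_prob_space "Q K" "Q {i}" ..
  have ci[measurable]: "(\<lambda>f. f i) \<in> measurable (PiM {i} (\<lambda>_. borel)) (borel :: (real \<times> (real^'d) \<times> (real^'w)) measure)"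
    by (rule measurable_component_singleton) simp
  have "(\<integral>\<^sup>+\<omega>. G (R K \<omega>, X i \<omega>) \<partial>M) = (\<integral>\<^sup>+\<omega>. G (R K \<omega>, R {i} \<omega> i) \<partial>M)" by (simp add: R_def)
  also have "\<dots> = (\<integral>\<^sup>+y. G (fst y, snd y i) \<partial>distr M (PiM K (\<lambda>_. borel) \<Otimes>\<^sub>M PiM {i} (\<lambda>_. borel)) (\<lambda>\<omega>. (R K \<omega>, R {i} \<omega>)))"
    by (subst nn_integral_distr) auto
  also have "\<dots> = (\<integral>\<^sup>+y. G (fst y, snd y i) \<partial>(Q K \<Otimes>\<^sub>M Q {i}))" by (simp add: distr_pair[OF assms(1)])
  also have "\<dots> = (\<integral>\<^sup>+v. (\<integral>\<^sup>+f. G (v, f i) \<partial>Q {i}) \<partial>Q K)"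
    by (subst PP.nn_integral_fst[symmetric]) (auto simp: Q_def)
  also have "\<dots> = (\<integral>\<^sup>+v. (\<integral>\<^sup>+x. G (v, x) \<partial>P) \<partial>Q K)"
  proof (rule nn_integral_cong)
    fix v assume "v \<in> space (Q K)"
    then have vm: "v \<in> space (PiM K (\<lambda>_. borel))" by (simp add: Q_def)
    show "(\<integral>\<^sup>+f. G (v, f i) \<partial>Q {i}) = (\<integral>\<^sup>+x. G (v, x) \<partial>P)"
      unfolding Qi_P[symmetric, of i] using vm
      by (subst nn_integral_distr) (auto simp: Q_def)
  qed
  finally show ?thesis .
qed

lemma blk_int:
  fixes G :: "((nat \<Rightarrow> real \<times> (real^'d) \<times> (real^'w)) \<times> (real \<times> (real^'d) \<times> (real^'w))) \<Rightarrow> real"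
  assumes "i \<notin> K" and Gm[measurable]: "G \<in> borel_measurable (PiM K (\<lambda>_. borel) \<Otimes>\<^sub>M borel)"
    and int: "integrable M (\<lambda>\<omega>. G (R K \<omega>, X i \<omega>))"
  shows "AE v in Q K. integrable P (\<lambda>x. G (v, x))"
    "(\<integral>\<omega>. G (R K \<omega>, X i \<omega>) \<partial>M) = (\<integral>v. (\<integral>x. G (v, x) \<partial>P) \<partial>Q K)"
proof -
  interpret PP: prob_space "Q {i}" by (rule PQ_prob)
  interpret QQ: prob_space "Q K" by (rule PQ_prob)
  interpret pair_prob_space "Q K" "Q {i}" ..
  have ci[measurable]: "(\<lambda>f. f i) \<in> measurable (PiM {i} (\<lambda>_. borel)) (borel :: (real \<times> (real^'d) \<times> (real^'w)) measure)"
    by (rule measurable_component_singleton) simp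
  have e1: "(\<lambda>\<omega>. G (R K \<omega>, X i \<omega>)) = (\<lambda>\<omega>. G (R K \<omega>, R {i} \<omega> i))" by (simp add: R_def)
  have int2: "integrable (Q K \<Otimes>\<^sub>M Q {i}) (\<lambda>y. G (fst y, snd y i))"
    using int unfolding distr_pair[OF assms(1), symmetric] e1
    by (subst integrable_distr_eq) auto
  have eqv: "integrable (Q {i}) (\<lambda>f. G (v, f i)) \<longleftrightarrow> integrable P (\<lambda>x. G (v, x))"
    and eqi: "(\<integral>f. G (v, f i) \<partial>Q {i}) = (\<integral>x. G (v, x) \<partial>P)"
    if "v \<in> space (Q K)" for v
  proof -
    from that have vm: "v \<in> space (PiM K (\<lambda>_. borel))" by (simp add: Q_def)
    show "integrable (Q {i}) (\<lambda>f. G (v, f i)) \<longleftrightarrow> integrable P (\<lambda>x. G (v, x))"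
      unfolding Qi_P[symmetric, of i] using vm
      by (subst integrable_distr_eq) (auto simp: Q_def)
    show "(\<integral>f. G (v, f i) \<partial>Q {i}) = (\<integral>x. G (v, x) \<partial>P)"
      unfolding Qi_P[symmetric, of i] using vm
      by (subst integral_distr) (auto simp: Q_def)
  qed
  show "AE v in Q K. integrable P (\<lambda>x. G (v, x))"
    using AE_integrable_fst'[OF int2] by (auto simp: eqv elim!: AE_mp intro!: AE_I2)
  have "(\<integral>\<omega>. G (R K \<omega>, X i \<omega>) \<partial>M) = (\<integral>y. G (fst y, snd y i) \<partial>distr M (PiM K (\<lambda>_. borel) \<Otimes>\<^sub>M PiM {i} (\<lambda>_. borel)) (\<lambda>\<omega>. (R K \<omega>, R {i} \<omega>)))"
    unfolding e1 by (subst integral_distr) auto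
  also have "\<dots> = (\<integral>y. G (fst y, snd y i) \<partial>(Q K \<Otimes>\<^sub>M Q {i}))" by (simp add: distr_pair[OF assms(1)])
  also have "\<dots> = (\<integral>v. (\<integral>f. G (v, f i) \<partial>Q {i}) \<partial>Q K)"
    using integral_fst'[OF int2] by simp
  also have "\<dots> = (\<integral>v. (\<integral>x. G (v, x) \<partial>P) \<partial>Q K)"
    by (rule Bochner_Integration.integral_cong[OF refl]) (simp add: eqi)
  finally show "(\<integral>\<omega>. G (R K \<omega>, X i \<omega>) \<partial>M) = (\<integral>v. (\<integral>x. G (v, x) \<partial>P) \<partial>Q K)" .
qed


definition PZ :: "(real^('w option)) measure" where
  "PZ = distr M borel (\<lambda>\<omega>. zf (X 0 \<omega>))"

lemma PZ_P: "PZ = distr P borel zf"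
  unfolding PZ_def P_def by (subst distr_distr) (auto simp: comp_def)

lemma I1P:
  fixes f :: "real^('w option) \<Rightarrow> ennreal"
  assumes fm[measurable]: "f \<in> borel_measurable borel"
  shows "(\<integral>\<^sup>+x. ennreal ((uf th x)\<^sup>2) * f (zf x) \<partial>P) \<le> ennreal Mb * (\<integral>\<^sup>+z. f z \<partial>PZ)"
proof -
  have "(\<integral>\<^sup>+x. ennreal ((uf th x)\<^sup>2) * f (zf x) \<partial>P) = (\<integral>\<^sup>+\<omega>. ennreal ((U0 \<omega>)\<^sup>2) * f (zf (X 0 \<omega>)) \<partial>M)"
    unfolding P_def by (subst nn_integral_distr) auto
  also have "\<dots> \<le> ennreal Mb * (\<integral>\<^sup>+\<omega>. f (zf (X 0 \<omega>)) \<partial>M)" by (rule I1[OF fm])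
  also have "(\<integral>\<^sup>+\<omega>. f (zf (X 0 \<omega>)) \<partial>M) = (\<integral>\<^sup>+z. f z \<partial>PZ)"
    unfolding PZ_def by (subst nn_integral_distr) auto
  finally show ?thesis .
qed

lemma I2P:
  fixes h :: "real^'w \<Rightarrow> real"
  assumes hm[measurable]: "h \<in> borel_measurable borel"
    and int: "integrable P (\<lambda>x. uf th x * h (wf x))"
  shows "(\<integral>x. uf th x * h (wf x) \<partial>P) = 0"
proof -
  have int': "integrable M (\<lambda>\<omega>. h (wf (X 0 \<omega>)) * U0 \<omega>)"
    using int unfolding P_def by (subst (asm) integrable_distr_eq) (auto simp: mult.commute)
  have "(\<integral>x. uf th x * h (wf x) \<partial>P) = (\<integral>\<omega>. h (wf (X 0 \<omega>)) * U0 \<omega> \<partial>M)"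
    unfolding P_def by (subst integral_distr) (auto simp: mult.commute)
  also have "\<dots> = 0" by (rule I2[OF hm int'])
  finally show ?thesis .
qed

lemma nnP_meas:
  assumes "case_prod h \<in> borel_measurable (N \<Otimes>\<^sub>M borel)"
  shows "(\<lambda>v. \<integral>\<^sup>+x. h v x \<partial>P) \<in> borel_measurable N"
proof -
  interpret PP: prob_space P by (rule PQ_prob)
  have "sets (N \<Otimes>\<^sub>M P) = sets (N \<Otimes>\<^sub>M borel)"
    by (rule sets_pair_measure_cong) (auto simp: P_def)
  then have "case_prod h \<in> borel_measurable (N \<Otimes>\<^sub>M P)"
    using assms measurable_cong_sets by blast
  then show ?thesis by (rule PP.borel_measurable_nn_integral)
qed

lemma nnPZ_meas:
  assumes "case_prod h \<in> borel_measurable (N \<Otimes>\<^sub>M borel)"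
  shows "(\<lambda>v. \<integral>\<^sup>+x. h v x \<partial>PZ) \<in> borel_measurable N"
proof -
  interpret PP: prob_space PZ unfolding PZ_def by (auto intro!: prob_space_distr)
  have "sets (N \<Otimes>\<^sub>M PZ) = sets (N \<Otimes>\<^sub>M borel)"
    by (rule sets_pair_measure_cong) (auto simp: PZ_def)
  then have "case_prod h \<in> borel_measurable (N \<Otimes>\<^sub>M PZ)"
    using assms measurable_cong_sets by blast
  then show ?thesis by (rule PP.borel_measurable_nn_integral)
qed

definition Eg :: "nat set \<Rightarrow> ((nat \<Rightarrow> real \<times> (real^'d) \<times> (real^'w)) \<Rightarrow> real^('w option) \<Rightarrow> real^'k) \<Rightarrow> (real^('w option) \<Rightarrow> real^'k) \<Rightarrow> ennreal" where
  "Eg K g Ups = (\<integral>\<^sup>+\<omega>. (\<integral>\<^sup>+z. ennreal ((norm (g (R K \<omega>) z - Ups z))\<^sup>2) \<partial>PZ) \<partial>M)"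

definition dl :: "nat set \<Rightarrow> ((nat \<Rightarrow> real \<times> (real^'d) \<times> (real^'w)) \<Rightarrow> real^('w option) \<Rightarrow> real^'k) \<Rightarrow> (real^('w option) \<Rightarrow> real^'k) \<Rightarrow> nat \<Rightarrow> 'a \<Rightarrow> real^'k" where
  "dl K g Ups i \<omega> = g (R K \<omega>) (zf (X i \<omega>)) - Ups (zf (X i \<omega>))"

definition av :: "nat set \<Rightarrow> ((nat \<Rightarrow> real \<times> (real^'d) \<times> (real^'w)) \<Rightarrow> real^('w option) \<Rightarrow> real^'k) \<Rightarrow> (real^('w option) \<Rightarrow> real^'k) \<Rightarrow> nat \<Rightarrow> 'a \<Rightarrow> real^'k" where
  "av K g Ups i \<omega> = uf th (X i \<omega>) *\<^sub>R dl K g Ups i \<omega>"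

context
  fixes K :: "nat set" and g :: "(nat \<Rightarrow> real \<times> (real^'d) \<times> (real^'w)) \<Rightarrow> real^('w option) \<Rightarrow> real^'k"
    and Ups :: "real^('w option) \<Rightarrow> real^'k"
  assumes gm[measurable]: "(\<lambda>(x, z). g x z) \<in> borel_measurable (PiM K (\<lambda>_. borel) \<Otimes>\<^sub>M borel)"
    and Upsm[measurable]: "Ups \<in> borel_measurable borel"
begin


lemma gm2[measurable]:
  assumes [measurable]: "a \<in> measurable N (PiM K (\<lambda>_. borel))" "b \<in> borel_measurable N"
  shows "(\<lambda>x. g (a x) (b x)) \<in> borel_measurable N"
  by (rule measurable_Pair_compose_split[OF gm]) auto

lemma dl_meas[measurable]: "dl K g Ups i \<in> borel_measurable M"
  unfolding dl_def by measurable

lemma Eg_Q: "Eg K g Ups = (\<integral>\<^sup>+v. (\<integral>\<^sup>+x. ennreal ((norm (g v (zf x) - Ups (zf x)))\<^sup>2) \<partial>P) \<partial>Q K)"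
proof -
  have "Eg K g Ups = (\<integral>\<^sup>+v. (\<integral>\<^sup>+z. ennreal ((norm (g v z - Ups z))\<^sup>2) \<partial>PZ) \<partial>Q K)"
    unfolding Eg_def Q_def by (subst nn_integral_distr) (auto intro!: nnPZ_meas)
  also have "\<dots> = (\<integral>\<^sup>+v. (\<integral>\<^sup>+x. ennreal ((norm (g v (zf x) - Ups (zf x)))\<^sup>2) \<partial>P) \<partial>Q K)"
  proof (rule nn_integral_cong)
    fix v assume "v \<in> space (Q K)"
    then have [measurable]: "v \<in> space (PiM K (\<lambda>_. borel))" by (simp add: Q_def)
    show "(\<integral>\<^sup>+z. ennreal ((norm (g v z - Ups z))\<^sup>2) \<partial>PZ) = (\<integral>\<^sup>+x. ennreal ((norm (g v (zf x) - Ups (zf x)))\<^sup>2) \<partial>P)"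
      unfolding PZ_P by (subst nn_integral_distr) (auto simp: P_def)
  qed
  finally show ?thesis .
qed

lemma estA:
  assumes "i \<notin> K"
  shows "(\<integral>\<^sup>+\<omega>. ennreal ((norm (dl K g Ups i \<omega>))\<^sup>2) \<partial>M) = Eg K g Ups"
proof -
  have "(\<integral>\<^sup>+\<omega>. ennreal ((norm (dl K g Ups i \<omega>))\<^sup>2) \<partial>M) =
     (\<integral>\<^sup>+\<omega>. (\<lambda>(v, x). ennreal ((norm (g v (zf x) - Ups (zf x)))\<^sup>2)) (R K \<omega>, X i \<omega>) \<partial>M)"
    by (simp add: dl_def)
  also have "\<dots> = (\<integral>\<^sup>+v. (\<integral>\<^sup>+x. ennreal ((norm (g v (zf x) - Ups (zf x)))\<^sup>2) \<partial>P) \<partial>Q K)"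
    by (subst blk_nn[OF assms]) auto
  finally show ?thesis by (simp add: Eg_Q)
qed

lemma estB:
  assumes "i \<notin> K"
  shows "(\<integral>\<^sup>+\<omega>. ennreal ((uf th (X i \<omega>))\<^sup>2 * (norm (dl K g Ups i \<omega>))\<^sup>2) \<partial>M) \<le> ennreal Mb * Eg K g Ups"
proof -
  have "(\<integral>\<^sup>+\<omega>. ennreal ((uf th (X i \<omega>))\<^sup>2 * (norm (dl K g Ups i \<omega>))\<^sup>2) \<partial>M) =
     (\<integral>\<^sup>+\<omega>. (\<lambda>(v, x). ennreal ((uf th x)\<^sup>2) * ennreal ((norm (g v (zf x) - Ups (zf x)))\<^sup>2)) (R K \<omega>, X i \<omega>) \<partial>M)"
    by (simp add: dl_def ennreal_mult)
  also have "\<dots> = (\<integral>\<^sup>+v. (\<integral>\<^sup>+x. ennreal ((uf th x)\<^sup>2) * ennreal ((norm (g v (zf x) - Ups (zf x)))\<^sup>2) \<partial>P) \<partial>Q K)"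
    by (subst blk_nn[OF assms]) auto
  also have "\<dots> \<le> (\<integral>\<^sup>+v. ennreal Mb * (\<integral>\<^sup>+x. ennreal ((norm (g v (zf x) - Ups (zf x)))\<^sup>2) \<partial>P) \<partial>Q K)"
  proof (rule nn_integral_mono)
    fix v assume "v \<in> space (Q K)"
    then have [measurable]: "v \<in> space (PiM K (\<lambda>_. borel))" by (simp add: Q_def)
    have "(\<integral>\<^sup>+x. ennreal ((uf th x)\<^sup>2) * ennreal ((norm (g v (zf x) - Ups (zf x)))\<^sup>2) \<partial>P)
       \<le> ennreal Mb * (\<integral>\<^sup>+z. ennreal ((norm (g v z - Ups z))\<^sup>2) \<partial>PZ)"
      by (rule I1P) measurable
    also have "(\<integral>\<^sup>+z. ennreal ((norm (g v z - Ups z))\<^sup>2) \<partial>PZ) = (\<integral>\<^sup>+x. ennreal ((norm (g v (zf x) - Ups (zf x)))\<^sup>2) \<partial>P)"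
      unfolding PZ_P by (subst nn_integral_distr) (auto simp: P_def)
    finally show "(\<integral>\<^sup>+x. ennreal ((uf th x)\<^sup>2) * ennreal ((norm (g v (zf x) - Ups (zf x)))\<^sup>2) \<partial>P)
       \<le> ennreal Mb * (\<integral>\<^sup>+x. ennreal ((norm (g v (zf x) - Ups (zf x)))\<^sup>2) \<partial>P)" .
  qed
  also have "\<dots> = ennreal Mb * Eg K g Ups"
    unfolding Eg_Q by (rule nn_integral_cmult) (auto simp add: Q_def intro!: nnP_meas)
  finally show ?thesis .
qed


lemma av_meas[measurable]: "av K g Ups i \<in> borel_measurable M"
  unfolding av_def by measurable

lemma av_norm2: "(norm (av K g Ups i \<omega>))\<^sup>2 = (uf th (X i \<omega>))\<^sup>2 * (norm (dl K g Ups i \<omega>))\<^sup>2"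
  by (simp add: av_def power_mult_distrib)

lemma av_int2:
  assumes "i \<notin> K" "Eg K g Ups \<noteq> \<infinity>"
  shows "integrable M (\<lambda>\<omega>. (norm (av K g Ups i \<omega>))\<^sup>2)"
  unfolding integrable_iff_bounded
proof
  show "(\<lambda>\<omega>. (norm (av K g Ups i \<omega>))\<^sup>2) \<in> borel_measurable M" by measurable
  have "(\<integral>\<^sup>+\<omega>. ennreal (norm ((norm (av K g Ups i \<omega>))\<^sup>2)) \<partial>M) = (\<integral>\<^sup>+\<omega>. ennreal ((uf th (X i \<omega>))\<^sup>2 * (norm (dl K g Ups i \<omega>))\<^sup>2) \<partial>M)"
    by (simp add: av_norm2)
  also have "\<dots> \<le> ennreal Mb * Eg K g Ups" by (rule estB[OF assms(1)])
  also have "\<dots> < \<infinity>" using assms(2) by (simp add: ennreal_mult_less_top less_top)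
  finally show "(\<integral>\<^sup>+\<omega>. ennreal (norm ((norm (av K g Ups i \<omega>))\<^sup>2)) \<partial>M) < \<infinity>" .
qed

lemma av_cross_int:
  assumes "i \<notin> K" "j \<notin> K" "Eg K g Ups \<noteq> \<infinity>"
  shows "integrable M (\<lambda>\<omega>. inner (av K g Ups i \<omega>) (av K g Ups j \<omega>))"
proof (rule Bochner_Integration.integrable_bound)
  show "integrable M (\<lambda>\<omega>. (norm (av K g Ups i \<omega>))\<^sup>2 + (norm (av K g Ups j \<omega>))\<^sup>2)"
    using av_int2[OF assms(1,3)] av_int2[OF assms(2,3)] by (rule Bochner_Integration.integrable_add)
  show "(\<lambda>\<omega>. inner (av K g Ups i \<omega>) (av K g Ups j \<omega>)) \<in> borel_measurable M" by measurable
  show "AE \<omega> in M. norm (inner (av K g Ups i \<omega>) (av K g Ups j \<omega>)) \<le> norm ((norm (av K g Ups i \<omega>))\<^sup>2 + (norm (av K g Ups j \<omega>))\<^sup>2)"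
  proof (rule AE_I2)
    fix \<omega>
    have "norm (inner (av K g Ups i \<omega>) (av K g Ups j \<omega>)) \<le> norm (av K g Ups i \<omega>) * norm (av K g Ups j \<omega>)"
      using Cauchy_Schwarz_ineq2 by simp
    also have "\<dots> \<le> (norm (av K g Ups i \<omega>))\<^sup>2 + (norm (av K g Ups j \<omega>))\<^sup>2"
    proof -
      have "2 * norm (av K g Ups i \<omega>) * norm (av K g Ups j \<omega>) \<le> (norm (av K g Ups i \<omega>))\<^sup>2 + (norm (av K g Ups j \<omega>))\<^sup>2"
        by (rule sum_squares_bound)
      moreover have "0 \<le> norm (av K g Ups i \<omega>) * norm (av K g Ups j \<omega>)" by simp
      ultimately show ?thesis by linarith
    qed
    finally show "norm (inner (av K g Ups i \<omega>) (av K g Ups j \<omega>)) \<le> norm ((norm (av K g Ups i \<omega>))\<^sup>2 + (norm (av K g Ups j \<omega>))\<^sup>2)" by simp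
  qed
qed

lemma av_cross_zero:
  assumes "i \<notin> K" "j \<notin> K" "i \<noteq> j" "Eg K g Ups \<noteq> \<infinity>"
  shows "(\<integral>\<omega>. inner (av K g Ups i \<omega>) (av K g Ups j \<omega>) \<partial>M) = 0"
proof -
  define K' where "K' = insert j K"
  have iK': "i \<notin> K'" using assms by (simp add: K'_def)
  have rK[measurable]: "(\<lambda>v. restrict v K) \<in> measurable (PiM K' (\<lambda>_. borel)) (PiM K (\<lambda>_. borel :: (real \<times> (real^'d) \<times> (real^'w)) measure))"
    by (rule measurable_restrict_subset) (auto simp: K'_def)
  have cj[measurable]: "(\<lambda>v. v j) \<in> measurable (PiM K' (\<lambda>_. borel)) (borel :: (real \<times> (real^'d) \<times> (real^'w)) measure)"
    by (rule measurable_component_singleton) (simp add: K'_def)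
  define c where "c v = uf th (v j) *\<^sub>R (g (restrict v K) (zf (v j)) - Ups (zf (v j)))" for v
  have cm[measurable]: "c \<in> borel_measurable (PiM K' (\<lambda>_. borel))" unfolding c_def by measurable
  define G where "G = (\<lambda>(v, x). uf th x * inner (g (restrict v K) (zf x) - Ups (zf x)) (c v))"
  have Gm[measurable]: "G \<in> borel_measurable (PiM K' (\<lambda>_. borel) \<Otimes>\<^sub>M borel)"
    unfolding G_def by measurable
  have eqG: "G (R K' \<omega>, X i \<omega>) = inner (av K g Ups i \<omega>) (av K g Ups j \<omega>)" for \<omega>
  proof -
    have "restrict (R K' \<omega>) K = R K \<omega>" by (auto simp: R_def K'_def)
    moreover have "R K' \<omega> j = X j \<omega>" by (simp add: R_def K'_def)
    ultimately show ?thesis by (simp add: G_def c_def av_def dl_def)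
  qed
  have intG: "integrable M (\<lambda>\<omega>. G (R K' \<omega>, X i \<omega>))"
    unfolding eqG by (rule av_cross_int[OF assms(1,2,4)])
  note b = blk_int[OF iK' Gm intG]
  have "(\<integral>\<omega>. inner (av K g Ups i \<omega>) (av K g Ups j \<omega>) \<partial>M) = (\<integral>v. (\<integral>x. G (v, x) \<partial>P) \<partial>Q K')"
    using b(2) unfolding eqG .
  also have "\<dots> = 0"
  proof (rule integral_eq_zero_AE)
    show "AE v in Q K'. (\<integral>x. G (v, x) \<partial>P) = 0"
      using b(1) AE_space
    proof eventually_elim
      case (elim v)
      then have [measurable]: "v \<in> space (PiM K' (\<lambda>_. borel))" by (simp add: Q_def)
      define h where "h w = inner (g (restrict v K) (aug w) - Ups (aug w)) (c v)" for w
      have hm[measurable]: "h \<in> borel_measurable borel" unfolding h_def by measurable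
      have Gh: "G (v, x) = uf th x * h (wf x)" for x by (simp add: G_def h_def zf_def wf_def)
      show ?case unfolding Gh by (rule I2P[OF hm]) (use elim(1) Gh in simp)
    qed
  qed
  finally show ?thesis .
qed

lemma estD:
  assumes "finite S" "S \<inter> K = {}" "Eg K g Ups \<noteq> \<infinity>"
  shows "(\<integral>\<^sup>+\<omega>. ennreal ((norm (\<Sum>i\<in>S. av K g Ups i \<omega>))\<^sup>2) \<partial>M) \<le> of_nat (card S) * (ennreal Mb * Eg K g Ups)"
proof -
  have nK: "i \<in> S \<Longrightarrow> i \<notin> K" for i using assms(2) by auto
  have eq: "(norm (\<Sum>i\<in>S. av K g Ups i \<omega>))\<^sup>2 = (\<Sum>i\<in>S. \<Sum>j\<in>S. inner (av K g Ups i \<omega>) (av K g Ups j \<omega>))" for \<omega>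
    by (simp add: power2_norm_eq_inner inner_sum_left inner_sum_right inner_commute)
  have intij: "i \<in> S \<Longrightarrow> j \<in> S \<Longrightarrow> integrable M (\<lambda>\<omega>. inner (av K g Ups i \<omega>) (av K g Ups j \<omega>))" for i j
    using av_cross_int[OF nK nK assms(3)] by blast
  have intS: "integrable M (\<lambda>\<omega>. (norm (\<Sum>i\<in>S. av K g Ups i \<omega>))\<^sup>2)"
    unfolding eq by (intro Bochner_Integration.integrable_sum intij)
  have "(\<integral>\<^sup>+\<omega>. ennreal ((norm (\<Sum>i\<in>S. av K g Ups i \<omega>))\<^sup>2) \<partial>M) = ennreal (\<integral>\<omega>. (norm (\<Sum>i\<in>S. av K g Ups i \<omega>))\<^sup>2 \<partial>M)"
    by (rule nn_integral_eq_integral[OF intS]) simp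
  also have "(\<integral>\<omega>. (norm (\<Sum>i\<in>S. av K g Ups i \<omega>))\<^sup>2 \<partial>M) = (\<Sum>i\<in>S. \<Sum>j\<in>S. (\<integral>\<omega>. inner (av K g Ups i \<omega>) (av K g Ups j \<omega>) \<partial>M))"
    unfolding eq
    by (subst Bochner_Integration.integral_sum) (auto intro!: Bochner_Integration.integrable_sum intij
        sum.cong Bochner_Integration.integral_sum)
  also have "\<dots> = (\<Sum>i\<in>S. (\<integral>\<omega>. (norm (av K g Ups i \<omega>))\<^sup>2 \<partial>M))"
  proof (rule sum.cong[OF refl])
    fix i assume iS: "i \<in> S"
    have "(\<Sum>j\<in>S. (\<integral>\<omega>. inner (av K g Ups i \<omega>) (av K g Ups j \<omega>) \<partial>M)) = (\<Sum>j\<in>S. if j = i then (\<integral>\<omega>. (norm (av K g Ups i \<omega>))\<^sup>2 \<partial>M) else 0)"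
      by (rule sum.cong[OF refl]) (auto simp: av_cross_zero[OF nK nK _ assms(3)] iS power2_norm_eq_inner)
    also have "\<dots> = (\<integral>\<omega>. (norm (av K g Ups i \<omega>))\<^sup>2 \<partial>M)" using assms(1) iS by simp
    finally show "(\<Sum>j\<in>S. (\<integral>\<omega>. inner (av K g Ups i \<omega>) (av K g Ups j \<omega>) \<partial>M)) = (\<integral>\<omega>. (norm (av K g Ups i \<omega>))\<^sup>2 \<partial>M)" .
  qed
  also have "ennreal \<dots> = (\<Sum>i\<in>S. ennreal (\<integral>\<omega>. (norm (av K g Ups i \<omega>))\<^sup>2 \<partial>M))"
    by (rule sum_ennreal[symmetric]) simp
  also have "\<dots> \<le> (\<Sum>i\<in>S. ennreal Mb * Eg K g Ups)"
  proof (rule sum_mono)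
    fix i assume iS: "i \<in> S"
    have "ennreal (\<integral>\<omega>. (norm (av K g Ups i \<omega>))\<^sup>2 \<partial>M) = (\<integral>\<^sup>+\<omega>. ennreal ((norm (av K g Ups i \<omega>))\<^sup>2) \<partial>M)"
      by (rule nn_integral_eq_integral[symmetric, OF av_int2[OF nK[OF iS] assms(3)]]) simp
    also have "\<dots> = (\<integral>\<^sup>+\<omega>. ennreal ((uf th (X i \<omega>))\<^sup>2 * (norm (dl K g Ups i \<omega>))\<^sup>2) \<partial>M)" by (simp add: av_norm2)
    also have "\<dots> \<le> ennreal Mb * Eg K g Ups" by (rule estB[OF nK[OF iS]])
    finally show "ennreal (\<integral>\<omega>. (norm (av K g Ups i \<omega>))\<^sup>2 \<partial>M) \<le> ennreal Mb * Eg K g Ups" .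
  qed
  also have "\<dots> = of_nat (card S) * (ennreal Mb * Eg K g Ups)" by simp
  finally show ?thesis .
qed

end

end



lemma outer_row: "outer v t $ r = v $ r *\<^sub>R t"
  unfolding outer_def by (simp add: vec_eq_iff)

lemma outer_norm: "norm (outer v t) = norm v * norm t"
proof -
  have "norm (outer v t) = L2_set (\<lambda>r. norm (outer v t $ r)) UNIV"
    by (rule norm_vec_def)
  also have "\<dots> = L2_set (\<lambda>r. norm t * norm (v $ r)) UNIV"
    unfolding outer_row by (simp add: mult.commute)
  also have "\<dots> = norm t * L2_set (\<lambda>r. norm (v $ r)) UNIV"
    by (rule L2_set_right_distrib[symmetric]) simp
  also have "L2_set (\<lambda>r. norm (v $ r)) UNIV = norm v" by (rule norm_vec_def[symmetric])
  finally show ?thesis by (simp add: mult.commute)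
qed

lemma outer_diff: "outer (a - b) t = outer a t - outer b t"
  unfolding outer_def by (simp add: vec_eq_iff left_diff_distrib)

lemma markov1:
  fixes f :: "'a \<Rightarrow> real"
  assumes [measurable]: "f \<in> borel_measurable M" and e: "e > 0"
  shows "emeasure M {\<omega>\<in>space M. e < f \<omega>} \<le> (\<integral>\<^sup>+\<omega>. ennreal (f \<omega> / e) \<partial>M)"
proof -
  have "emeasure M {\<omega>\<in>space M. e < f \<omega>} = (\<integral>\<^sup>+\<omega>. indicator {\<omega>\<in>space M. e < f \<omega>} \<omega> \<partial>M)"
    by (rule nn_integral_indicator[symmetric]) measurable
  also have "\<dots> \<le> (\<integral>\<^sup>+\<omega>. ennreal (f \<omega> / e) \<partial>M)"
  proof (rule nn_integral_mono)
    fix \<omega> assume "\<omega> \<in> space M"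
    show "indicator {\<omega>\<in>space M. e < f \<omega>} \<omega> \<le> ennreal (f \<omega> / e)"
    proof (cases "e < f \<omega>")
      case True
      then have "1 \<le> f \<omega> / e" using e by simp
      then show ?thesis using True \<open>\<omega> \<in> space M\<close> by (simp add: indicator_def)
    qed (simp add: indicator_def)
  qed
  finally show ?thesis .
qed

lemma op1I:
  fixes Z :: "nat \<Rightarrow> 'a \<Rightarrow> 'b::real_normed_vector"
  assumes "\<And>n. Z n \<in> borel_measurable M"
    and "\<And>e. e > 0 \<Longrightarrow> \<exists>B. B \<longlonglongrightarrow> 0 \<and> eventually (\<lambda>n. emeasure M {\<omega>\<in>space M. e < norm (Z n \<omega>)} \<le> ennreal (B n)) sequentially"
  shows "op1 M Z"
  unfolding op1_def
proof (intro conjI allI impI)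
  fix n show "Z n \<in> borel_measurable M" by fact
next
  fix e :: real assume "e > 0"
  then obtain B where B: "B \<longlonglongrightarrow> 0" and ev: "eventually (\<lambda>n. emeasure M {\<omega>\<in>space M. e < norm (Z n \<omega>)} \<le> ennreal (B n)) sequentially"
    using assms(2) by blast
  show "(\<lambda>n. measure M {\<omega> \<in> space M. e < norm (Z n \<omega>)}) \<longlonglongrightarrow> 0"
  proof (rule tendsto_sandwich[of "\<lambda>_. 0" _ _ "\<lambda>n. max (B n) 0"])
    show "eventually (\<lambda>n. 0 \<le> measure M {\<omega> \<in> space M. e < norm (Z n \<omega>)}) sequentially" by simp
    show "eventually (\<lambda>n. measure M {\<omega> \<in> space M. e < norm (Z n \<omega>)} \<le> max (B n) 0) sequentially"
      using ev
    proof eventually_elim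
      case (elim n)
      have "enn2real (emeasure M {\<omega> \<in> space M. e < norm (Z n \<omega>)}) \<le> enn2real (ennreal (B n))"
        using elim by (intro enn2real_mono) auto
      then show ?case by (cases "B n \<ge> 0") (auto simp: measure_def ennreal_neg)
    qed
    show "(\<lambda>_. 0) \<longlonglongrightarrow> (0::real)" by simp
    show "(\<lambda>n. max (B n) 0) \<longlonglongrightarrow> 0" using tendsto_max[OF B tendsto_const[of 0]] by simp
  qed
qed




context L begin

lemma estA_real:
  fixes g :: "(nat \<Rightarrow> real \<times> (real^'d) \<times> (real^'w)) \<Rightarrow> real^('w option) \<Rightarrow> real^'k"
  assumes gm: "(\<lambda>(x, z). g x z) \<in> borel_measurable (PiM K (\<lambda>_. borel) \<Otimes>\<^sub>M borel)"
    and Upsm: "Ups \<in> borel_measurable borel"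
    and iK: "i \<notin> K" and fin: "Eg K g Ups \<noteq> \<infinity>"
  shows "integrable M (\<lambda>\<omega>. (norm (dl K g Ups i \<omega>))\<^sup>2)"
    "(\<integral>\<omega>. (norm (dl K g Ups i \<omega>))\<^sup>2 \<partial>M) = enn2real (Eg K g Ups)"
proof -
  have e: "(\<integral>\<^sup>+\<omega>. ennreal ((norm (dl K g Ups i \<omega>))\<^sup>2) \<partial>M) = Eg K g Ups"
    by (rule estA[OF gm Upsm iK])
  show int: "integrable M (\<lambda>\<omega>. (norm (dl K g Ups i \<omega>))\<^sup>2)"
    unfolding integrable_iff_bounded
  proof
    show "(\<lambda>\<omega>. (norm (dl K g Ups i \<omega>))\<^sup>2) \<in> borel_measurable M"
      by (rule measurable_compose[OF dl_meas[OF gm Upsm]]) measurable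
    show "(\<integral>\<^sup>+\<omega>. ennreal (norm ((norm (dl K g Ups i \<omega>))\<^sup>2)) \<partial>M) < \<infinity>"
      using e fin by (simp add: less_top)
  qed
  have "(\<integral>\<^sup>+\<omega>. ennreal ((norm (dl K g Ups i \<omega>))\<^sup>2) \<partial>M) = ennreal (\<integral>\<omega>. (norm (dl K g Ups i \<omega>))\<^sup>2 \<partial>M)"
    by (rule nn_integral_eq_integral[OF int]) simp
  then show "(\<integral>\<omega>. (norm (dl K g Ups i \<omega>))\<^sup>2 \<partial>M) = enn2real (Eg K g Ups)"
    using e by simp
qed

lemma T_int:
  assumes Tint: "integrable M (\<lambda>\<omega>. (norm (tf (X 0 \<omega>)))\<^sup>2)"
  shows "integrable M (\<lambda>\<omega>. (norm (tf (X i \<omega>)))\<^sup>2)"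
    "(\<integral>\<omega>. (norm (tf (X i \<omega>)))\<^sup>2 \<partial>M) = (\<integral>\<omega>. (norm (tf (X 0 \<omega>)))\<^sup>2 \<partial>M)"
proof -
  have "integrable (distr M borel (X 0)) (\<lambda>x. (norm (tf x))\<^sup>2)"
    using Tint by (subst integrable_distr_eq) auto
  then have "integrable (distr M borel (X i)) (\<lambda>x. (norm (tf x))\<^sup>2)" by (simp only: ident[of i])
  then show "integrable M (\<lambda>\<omega>. (norm (tf (X i \<omega>)))\<^sup>2)"
    by (subst (asm) integrable_distr_eq) auto
  have "(\<integral>\<omega>. (norm (tf (X i \<omega>)))\<^sup>2 \<partial>M) = (\<integral>x. (norm (tf x))\<^sup>2 \<partial>distr M borel (X i))"
    by (subst integral_distr) auto
  also have "\<dots> = (\<integral>x. (norm (tf x))\<^sup>2 \<partial>distr M borel (X 0))" by (simp only: ident[of i])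
  also have "\<dots> = (\<integral>\<omega>. (norm (tf (X 0 \<omega>)))\<^sup>2 \<partial>M)"
    by (subst integral_distr) auto
  finally show "(\<integral>\<omega>. (norm (tf (X i \<omega>)))\<^sup>2 \<partial>M) = (\<integral>\<omega>. (norm (tf (X 0 \<omega>)))\<^sup>2 \<partial>M)" .
qed

lemma Mb_max: "ennreal Mb = ennreal (max Mb 0)"
  by (cases "Mb \<ge> 0") (auto simp: ennreal_neg max_def)


end

lemma outer_cont: "continuous_on UNIV (\<lambda>p. outer (fst p) (snd p))"
  unfolding outer_def
  by (intro continuous_on_vec_lambda continuous_intros)

lemma outer_meas[measurable]:
  assumes "f \<in> borel_measurable M" "g \<in> borel_measurable M"
  shows "(\<lambda>x. outer (f x) (g x)) \<in> borel_measurable M"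
  by (rule borel_measurable_continuous_Pair[OF assms outer_cont])

lemma prod_bound:
  fixes a b s :: real
  assumes "s > 0"
  shows "a * b \<le> (a\<^sup>2 / s + s * b\<^sup>2) / 2"
proof -
  have "0 \<le> (a - s * b)\<^sup>2" by simp
  then have "2 * s * (a * b) \<le> a\<^sup>2 + s\<^sup>2 * b\<^sup>2" by (simp add: power2_diff power_mult_distrib algebra_simps)
  then have "s * (2 * (a * b)) \<le> s * (a\<^sup>2 / s + s * b\<^sup>2)" using assms
    by (simp add: algebra_simps power2_eq_square)
  then have "2 * (a * b) \<le> a\<^sup>2 / s + s * b\<^sup>2" using assms by (simp add: mult_le_cancel_left)
  then show ?thesis by simp
qed

lemma norm_sum2: "(norm (a + b))\<^sup>2 \<le> 2 * (norm a)\<^sup>2 + 2 * (norm (b::'v::real_normed_vector))\<^sup>2"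
proof -
  have "norm (a + b) \<le> norm a + norm b" by (rule norm_triangle_ineq)
  then have "(norm (a + b))\<^sup>2 \<le> (norm a + norm b)\<^sup>2" by (simp add: power_mono)
  also have "\<dots> \<le> 2 * (norm a)\<^sup>2 + 2 * (norm b)\<^sup>2"
    using sum_squares_bound[of "norm a" "norm b"] by (simp add: power2_sum)
  finally show ?thesis .
qed

context L begin

context
  fixes S1 :: "nat \<Rightarrow> nat set"
    and g1 g2 :: "nat \<Rightarrow> (nat \<Rightarrow> real \<times> (real^'d) \<times> (real^'w)) \<Rightarrow> real^('w option) \<Rightarrow> real^'k"
    and Ups :: "real^('w option) \<Rightarrow> real^'k"
  assumes S1sub: "\<And>n. S1 n \<subseteq> {..<2*n}" and S1card: "\<And>n. card (S1 n) = n"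
    and g1m: "\<And>n. (\<lambda>(x, z). g1 n x z) \<in> borel_measurable (PiM ({..<2*n} - S1 n) (\<lambda>_. borel) \<Otimes>\<^sub>M borel)"
    and g2m: "\<And>n. (\<lambda>(x, z). g2 n x z) \<in> borel_measurable (PiM (S1 n) (\<lambda>_. borel) \<Otimes>\<^sub>M borel)"
    and Upsm: "Ups \<in> borel_measurable borel"
    and E1: "(\<lambda>n. Eg ({..<2*n} - S1 n) (g1 n) Ups) \<longlonglongrightarrow> 0"
    and E2: "(\<lambda>n. Eg (S1 n) (g2 n) Ups) \<longlonglongrightarrow> 0"
    and Tint: "integrable M (\<lambda>\<omega>. (norm (tf (X 0 \<omega>)))\<^sup>2)"
begin

definition "Uh n i \<omega> = (if i \<in> S1 n then g1 n (R ({..<2*n} - S1 n) \<omega>) (zf (X i \<omega>)) else g2 n (R (S1 n) \<omega>) (zf (X i \<omega>)))"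
definition "dd n i \<omega> = Uh n i \<omega> - Ups (zf (X i \<omega>))"
definition "e1 n = enn2real (Eg ({..<2*n} - S1 n) (g1 n) Ups)"
definition "e2 n = enn2real (Eg (S1 n) (g2 n) Ups)"

lemma Uh_meas[measurable]: "Uh n i \<in> borel_measurable M"
proof (cases "i \<in> S1 n")
  case True
  have "(\<lambda>\<omega>. g1 n (R ({..<2*n} - S1 n) \<omega>) (zf (X i \<omega>))) \<in> borel_measurable M"
    by (rule measurable_Pair_compose_split[OF g1m R_meas]) measurable
  moreover have "Uh n i = (\<lambda>\<omega>. g1 n (R ({..<2*n} - S1 n) \<omega>) (zf (X i \<omega>)))"
    using True by (intro ext) (simp only: Uh_def if_True)
  ultimately show ?thesis by (simp only:)
next
  case False
  have "(\<lambda>\<omega>. g2 n (R (S1 n) \<omega>) (zf (X i \<omega>))) \<in> borel_measurable M"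
    by (rule measurable_Pair_compose_split[OF g2m R_meas]) measurable
  moreover have "Uh n i = (\<lambda>\<omega>. g2 n (R (S1 n) \<omega>) (zf (X i \<omega>)))"
    using False by (intro ext) (simp only: Uh_def if_False)
  ultimately show ?thesis by (simp only:)
qed

lemma dd_meas[measurable]: "dd n i \<in> borel_measurable M"
proof -
  have "(\<lambda>\<omega>. Uh n i \<omega> - Ups (zf (X i \<omega>))) \<in> borel_measurable M"
    using Upsm by measurable
  then show ?thesis unfolding dd_def[abs_def] .
qed

lemma dd1: "i \<in> S1 n \<Longrightarrow> dd n i \<omega> = dl ({..<2*n} - S1 n) (g1 n) Ups i \<omega>"
  by (simp only: dd_def Uh_def dl_def if_True)

lemma dd2: "i \<notin> S1 n \<Longrightarrow> dd n i \<omega> = dl (S1 n) (g2 n) Ups i \<omega>"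
  by (simp only: dd_def Uh_def dl_def if_False)

lemma e12_lim: "e1 \<longlonglongrightarrow> 0" "e2 \<longlonglongrightarrow> 0"
  unfolding e1_def[abs_def] e2_def[abs_def]
  by (rule tendsto_enn2real, use E1 E2 in simp_all)+

lemma e12_nonneg: "0 \<le> e1 n" "0 \<le> e2 n"
  by (simp_all add: e1_def e2_def)

lemma ev_fin: "eventually (\<lambda>n. Eg ({..<2*n} - S1 n) (g1 n) Ups = ennreal (e1 n) \<and>
    Eg (S1 n) (g2 n) Ups = ennreal (e2 n) \<and> 0 < n) sequentially"
proof -
  have a: "eventually (\<lambda>n. Eg ({..<2*n} - S1 n) (g1 n) Ups < 1) sequentially"
    using order_tendstoD(2)[OF E1, of 1] by simp
  have b: "eventually (\<lambda>n. Eg (S1 n) (g2 n) Ups < 1) sequentially"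
    using order_tendstoD(2)[OF E2, of 1] by simp
  show ?thesis using a b eventually_gt_at_top[of 0]
  proof eventually_elim
    case (elim n)
    have lt: "x < 1 \<Longrightarrow> x \<noteq> (\<top>::ennreal)" for x
      using ennreal_less_top[of 1] by (metis ennreal_1 order.strict_trans order.strict_implies_not_eq)
    show ?case unfolding e1_def e2_def using elim lt
      by (auto simp: ennreal_enn2real_if)
  qed
qed

lemma dd_int: "eventually (\<lambda>n. \<forall>i<2*n. integrable M (\<lambda>\<omega>. (norm (dd n i \<omega>))\<^sup>2) \<and>
    (\<integral>\<omega>. (norm (dd n i \<omega>))\<^sup>2 \<partial>M) \<le> e1 n + e2 n) sequentially"
  using ev_fin
proof eventually_elim
  case (elim n)
  show ?case
  proof (intro allI impI)
    fix i assume i: "i < 2*n"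
    show "integrable M (\<lambda>\<omega>. (norm (dd n i \<omega>))\<^sup>2) \<and> (\<integral>\<omega>. (norm (dd n i \<omega>))\<^sup>2 \<partial>M) \<le> e1 n + e2 n"
    proof (cases "i \<in> S1 n")
      case True
      have eq: "dd n i = dl ({..<2*n} - S1 n) (g1 n) Ups i" using dd1[OF True] by (intro ext) simp
      have iK: "i \<notin> {..<2*n} - S1 n" using True by simp
      have fin: "Eg ({..<2*n} - S1 n) (g1 n) Ups \<noteq> \<infinity>" using elim by simp
      note r = estA_real[OF g1m Upsm iK fin]
      show ?thesis unfolding eq using r e12_nonneg[of n] by (simp add: e1_def)
    next
      case False
      have eq: "dd n i = dl (S1 n) (g2 n) Ups i" using dd2[OF False] by (intro ext) simp
      have fin: "Eg (S1 n) (g2 n) Ups \<noteq> \<infinity>" using elim by simp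
      note r = estA_real[OF g2m Upsm False fin]
      show ?thesis unfolding eq using r e12_nonneg[of n] by (simp add: e2_def)
    qed
  qed
qed

theorem claim1: "op1 M (\<lambda>n \<omega>. (1 / real (2*n)) *\<^sub>R (\<Sum>i<2*n. outer (Uh n i \<omega>) (tf (X i \<omega>)))
                     - (1 / real (2*n)) *\<^sub>R (\<Sum>i<2*n. outer (Ups (zf (X i \<omega>))) (tf (X i \<omega>))))"
proof (rule op1I)
  fix n show "(\<lambda>\<omega>. (1 / real (2*n)) *\<^sub>R (\<Sum>i<2*n. outer (Uh n i \<omega>) (tf (X i \<omega>)))
                     - (1 / real (2*n)) *\<^sub>R (\<Sum>i<2*n. outer (Ups (zf (X i \<omega>))) (tf (X i \<omega>)))) \<in> borel_measurable M"
    using Upsm by measurable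
next
  fix e :: real assume e: "e > 0"
  define C where "C = (\<integral>\<omega>. (norm (tf (X 0 \<omega>)))\<^sup>2 \<partial>M)"
  have C0: "0 \<le> C" unfolding C_def by (intro Bochner_Integration.integral_nonneg) simp
  define x where "x n = e1 n + e2 n" for n
  define s where "s n = sqrt (x n) + 1 / (real n + 1)" for n
  define B where "B n = (sqrt (x n) + C * s n) / (2 * e)" for n
  have x0: "0 \<le> x n" for n unfolding x_def using e12_nonneg[of n] by simp
  have s_pos: "0 < s n" for n
  proof -
    have "0 \<le> sqrt (x n)" using x0[of n] by simp
    moreover have "0 < 1 / (real n + 1)" by simp
    ultimately show ?thesis unfolding s_def by linarith
  qed
  have xlim: "x \<longlonglongrightarrow> 0" unfolding x_def[abs_def] using tendsto_add[OF e12_lim] by simp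
  have sqlim: "(\<lambda>n. sqrt (x n)) \<longlonglongrightarrow> 0" using tendsto_real_sqrt[OF xlim] by simp
  have ilim: "(\<lambda>n. 1 / (real n + 1)) \<longlonglongrightarrow> 0"
    using LIMSEQ_inverse_real_of_nat by (simp add: inverse_eq_divide add.commute)
  have slim: "s \<longlonglongrightarrow> 0" unfolding s_def[abs_def] using tendsto_add[OF sqlim ilim] by simp
  have Blim: "B \<longlonglongrightarrow> 0" unfolding B_def[abs_def]
    using tendsto_divide[OF tendsto_add[OF sqlim tendsto_mult[OF tendsto_const[of C] slim]] tendsto_const[of "2*e"]] e
    by simp
  show "\<exists>B. B \<longlonglongrightarrow> 0 \<and> eventually (\<lambda>n. emeasure M {\<omega>\<in>space M. e < norm ((1 / real (2*n)) *\<^sub>R (\<Sum>i<2*n. outer (Uh n i \<omega>) (tf (X i \<omega>)))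
                     - (1 / real (2*n)) *\<^sub>R (\<Sum>i<2*n. outer (Ups (zf (X i \<omega>))) (tf (X i \<omega>))))} \<le> ennreal (B n)) sequentially"
  proof (intro exI conjI)
    show "B \<longlonglongrightarrow> 0" by (rule Blim)
    show "eventually (\<lambda>n. emeasure M {\<omega>\<in>space M. e < norm ((1 / real (2*n)) *\<^sub>R (\<Sum>i<2*n. outer (Uh n i \<omega>) (tf (X i \<omega>)))
                     - (1 / real (2*n)) *\<^sub>R (\<Sum>i<2*n. outer (Ups (zf (X i \<omega>))) (tf (X i \<omega>))))} \<le> ennreal (B n)) sequentially"
      using ev_fin dd_int
    proof eventually_elim
      case (elim n)
      define N where "N = real (2*n)"
      have N0: "0 < N" using elim by (simp add: N_def)
      define Z where "Z \<omega> = (1 / real (2*n)) *\<^sub>R (\<Sum>i<2*n. outer (Uh n i \<omega>) (tf (X i \<omega>)))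
                     - (1 / real (2*n)) *\<^sub>R (\<Sum>i<2*n. outer (Ups (zf (X i \<omega>))) (tf (X i \<omega>)))" for \<omega>
      have Zm: "Z \<in> borel_measurable M" unfolding Z_def[abs_def] using Upsm by measurable
      have eqZ: "Z \<omega> = (1 / N) *\<^sub>R (\<Sum>i<2*n. outer (dd n i \<omega>) (tf (X i \<omega>)))" for \<omega>
        by (simp add: Z_def N_def dd_def outer_diff sum_subtractf scaleR_diff_right)
      define F where "F \<omega> = (1 / (2 * N * e)) * (\<Sum>i<2*n. (norm (dd n i \<omega>))\<^sup>2 / s n + s n * (norm (tf (X i \<omega>)))\<^sup>2)" for \<omega>
      have F0: "0 \<le> F \<omega>" for \<omega> unfolding F_def using N0 e s_pos[of n]
        by (intro mult_nonneg_nonneg sum_nonneg add_nonneg_nonneg) auto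
      have bound: "norm (Z \<omega>) / e \<le> F \<omega>" for \<omega>
      proof -
        have "norm (Z \<omega>) = (1 / N) * norm (\<Sum>i<2*n. outer (dd n i \<omega>) (tf (X i \<omega>)))"
          using N0 by (simp add: eqZ)
        also have "\<dots> \<le> (1 / N) * (\<Sum>i<2*n. norm (dd n i \<omega>) * norm (tf (X i \<omega>)))"
          using N0 by (intro mult_left_mono order.trans[OF norm_sum]) (auto simp: outer_norm)
        also have "\<dots> \<le> (1 / N) * (\<Sum>i<2*n. ((norm (dd n i \<omega>))\<^sup>2 / s n + s n * (norm (tf (X i \<omega>)))\<^sup>2) / 2)"
          using N0 by (intro mult_left_mono sum_mono prod_bound s_pos) auto
        finally have "norm (Z \<omega>) \<le> (1 / N) * (\<Sum>i<2*n. ((norm (dd n i \<omega>))\<^sup>2 / s n + s n * (norm (tf (X i \<omega>)))\<^sup>2) / 2)" .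
        then have "norm (Z \<omega>) / e \<le> (1 / N) * (\<Sum>i<2*n. ((norm (dd n i \<omega>))\<^sup>2 / s n + s n * (norm (tf (X i \<omega>)))\<^sup>2) / 2) / e"
          by (rule divide_right_mono) (use e in simp)
        also have "\<dots> = F \<omega>" unfolding F_def by (simp add: sum_divide_distrib[symmetric] field_simps)
        finally show ?thesis .
      qed
      have inti: "integrable M (\<lambda>\<omega>. (norm (dd n i \<omega>))\<^sup>2 / s n + s n * (norm (tf (X i \<omega>)))\<^sup>2)" if "i < 2*n" for i
        using elim(2) that T_int(1)[OF Tint, of i] by auto
      have intF: "integrable M F" unfolding F_def[abs_def]
        by (intro integrable_mult_right Bochner_Integration.integrable_sum inti) auto
      have "(\<integral>\<omega>. F \<omega> \<partial>M) = (1 / (2 * N * e)) * (\<Sum>i<2*n. (\<integral>\<omega>. (norm (dd n i \<omega>))\<^sup>2 \<partial>M) / s n + s n * C)"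
        unfolding F_def C_def using elim(2) T_int[OF Tint]
        by (subst integral_mult_right_zero, subst Bochner_Integration.integral_sum)
          (auto intro!: inti sum.cong)
      also have "\<dots> \<le> (1 / (2 * N * e)) * (\<Sum>i<2*n. x n / s n + s n * C)"
        using N0 e elim(2) s_pos[of n]
        by (intro mult_left_mono sum_mono add_right_mono divide_right_mono) (auto simp: x_def)
      also have "\<dots> = (x n / s n + s n * C) / (2 * e)"
        using N0 e by (simp add: N_def field_simps)
      also have "\<dots> \<le> B n"
      proof -
        have "x n / s n \<le> sqrt (x n)"
        proof -
          have "x n = sqrt (x n) * sqrt (x n)" using x0[of n] by simp
          also have "\<dots> \<le> sqrt (x n) * s n" using x0[of n] by (intro mult_left_mono) (auto simp: s_def)
          finally show ?thesis using s_pos[of n] by (simp add: divide_le_eq)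
        qed
        then show ?thesis unfolding B_def using e by (simp add: divide_right_mono mult.commute)
      qed
      finally have intFB: "(\<integral>\<omega>. F \<omega> \<partial>M) \<le> B n" .
      have "emeasure M {\<omega>\<in>space M. e < norm (Z \<omega>)} \<le> (\<integral>\<^sup>+\<omega>. ennreal (norm (Z \<omega>) / e) \<partial>M)"
        by (rule markov1[OF _ e]) (use Zm in measurable)
      also have "\<dots> \<le> (\<integral>\<^sup>+\<omega>. ennreal (F \<omega>) \<partial>M)"
        by (intro nn_integral_mono ennreal_leI bound)
      also have "\<dots> = ennreal (\<integral>\<omega>. F \<omega> \<partial>M)"
        by (rule nn_integral_eq_integral[OF intF]) (simp add: F0)
      also have "\<dots> \<le> ennreal (B n)" using intFB by (rule ennreal_leI)
      finally show ?case unfolding Z_def .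
    qed
  qed
qed

theorem claim2: "op1 M (\<lambda>n \<omega>. (1 / sqrt (real (2*n))) *\<^sub>R (\<Sum>i<2*n. uf th (X i \<omega>) *\<^sub>R Uh n i \<omega>)
                     - (1 / sqrt (real (2*n))) *\<^sub>R (\<Sum>i<2*n. uf th (X i \<omega>) *\<^sub>R Ups (zf (X i \<omega>))))"
proof (rule op1I)
  fix n show "(\<lambda>\<omega>. (1 / sqrt (real (2*n))) *\<^sub>R (\<Sum>i<2*n. uf th (X i \<omega>) *\<^sub>R Uh n i \<omega>)
                     - (1 / sqrt (real (2*n))) *\<^sub>R (\<Sum>i<2*n. uf th (X i \<omega>) *\<^sub>R Ups (zf (X i \<omega>)))) \<in> borel_measurable M"
    using Upsm by measurable
next
  fix e :: real assume e: "e > 0"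
  define m where "m = max Mb 0"
  have m0: "0 \<le> m" by (simp add: m_def)
  define B where "B n = m * (e1 n + e2 n) / e\<^sup>2" for n
  have Blim: "B \<longlonglongrightarrow> 0" unfolding B_def[abs_def]
    using tendsto_divide[OF tendsto_mult[OF tendsto_const[of m] tendsto_add[OF e12_lim]] tendsto_const[of "e\<^sup>2"]] e
    by simp
  show "\<exists>B. B \<longlonglongrightarrow> 0 \<and> eventually (\<lambda>n. emeasure M {\<omega>\<in>space M. e < norm ((1 / sqrt (real (2*n))) *\<^sub>R (\<Sum>i<2*n. uf th (X i \<omega>) *\<^sub>R Uh n i \<omega>)
                     - (1 / sqrt (real (2*n))) *\<^sub>R (\<Sum>i<2*n. uf th (X i \<omega>) *\<^sub>R Ups (zf (X i \<omega>))))} \<le> ennreal (B n)) sequentially"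
  proof (intro exI conjI)
    show "B \<longlonglongrightarrow> 0" by (rule Blim)
    show "eventually (\<lambda>n. emeasure M {\<omega>\<in>space M. e < norm ((1 / sqrt (real (2*n))) *\<^sub>R (\<Sum>i<2*n. uf th (X i \<omega>) *\<^sub>R Uh n i \<omega>)
                     - (1 / sqrt (real (2*n))) *\<^sub>R (\<Sum>i<2*n. uf th (X i \<omega>) *\<^sub>R Ups (zf (X i \<omega>))))} \<le> ennreal (B n)) sequentially"
      using ev_fin
    proof eventually_elim
      case (elim n)
      define K1 where "K1 = {..<2*n} - S1 n"
      have n0: "0 < n" using elim by simp
      define Z where "Z \<omega> = (1 / sqrt (real (2*n))) *\<^sub>R (\<Sum>i<2*n. uf th (X i \<omega>) *\<^sub>R Uh n i \<omega>)
                     - (1 / sqrt (real (2*n))) *\<^sub>R (\<Sum>i<2*n. uf th (X i \<omega>) *\<^sub>R Ups (zf (X i \<omega>)))" for \<omega>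
      have Zm: "Z \<in> borel_measurable M" unfolding Z_def[abs_def] using Upsm by measurable
      define s1 where "s1 \<omega> = (\<Sum>i\<in>S1 n. av K1 (g1 n) Ups i \<omega>)" for \<omega>
      define s2 where "s2 \<omega> = (\<Sum>i\<in>K1. av (S1 n) (g2 n) Ups i \<omega>)" for \<omega>
      have s1m: "s1 \<in> borel_measurable M" unfolding s1_def[abs_def] K1_def
        by (intro borel_measurable_sum av_meas[OF g1m Upsm])
      have s2m: "s2 \<in> borel_measurable M" unfolding s2_def[abs_def]
        by (intro borel_measurable_sum av_meas[OF g2m Upsm])
      have eqZ: "Z \<omega> = (1 / sqrt (real (2*n))) *\<^sub>R (s1 \<omega> + s2 \<omega>)" for \<omega>
      proof -
        have "Z \<omega> = (1 / sqrt (real (2*n))) *\<^sub>R (\<Sum>i<2*n. uf th (X i \<omega>) *\<^sub>R dd n i \<omega>)"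
          by (simp add: Z_def dd_def scaleR_diff_right sum_subtractf)
        also have "(\<Sum>i<2*n. uf th (X i \<omega>) *\<^sub>R dd n i \<omega>) =
            (\<Sum>i\<in>K1. uf th (X i \<omega>) *\<^sub>R dd n i \<omega>) + (\<Sum>i\<in>S1 n. uf th (X i \<omega>) *\<^sub>R dd n i \<omega>)"
          unfolding K1_def by (rule sum.subset_diff[OF S1sub]) simp
        also have "(\<Sum>i\<in>S1 n. uf th (X i \<omega>) *\<^sub>R dd n i \<omega>) = s1 \<omega>"
          unfolding s1_def by (rule sum.cong[OF refl]) (simp add: dd1 av_def K1_def)
        also have "(\<Sum>i\<in>K1. uf th (X i \<omega>) *\<^sub>R dd n i \<omega>) = s2 \<omega>"
          unfolding s2_def by (rule sum.cong[OF refl]) (simp add: dd2 av_def K1_def)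
        finally show ?thesis by (simp add: add.commute)
      qed
      have nb: "(norm (Z \<omega>))\<^sup>2 \<le> ((norm (s1 \<omega>))\<^sup>2 + (norm (s2 \<omega>))\<^sup>2) / real n" for \<omega>
      proof -
        have "(norm (Z \<omega>))\<^sup>2 = (norm (s1 \<omega> + s2 \<omega>))\<^sup>2 / real (2*n)"
          by (simp add: eqZ power_mult_distrib power_divide)
        also have "\<dots> \<le> (2 * (norm (s1 \<omega>))\<^sup>2 + 2 * (norm (s2 \<omega>))\<^sup>2) / real (2*n)"
          by (rule divide_right_mono[OF norm_sum2]) simp
        also have "\<dots> = ((norm (s1 \<omega>))\<^sup>2 + (norm (s2 \<omega>))\<^sup>2) / real n" using n0 by (simp add: field_simps)
        finally show ?thesis .
      qed
      define c where "c = 1 / (real n * e\<^sup>2)"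
      have c0: "0 \<le> c" unfolding c_def by simp
      have setq: "{\<omega>\<in>space M. e < norm (Z \<omega>)} = {\<omega>\<in>space M. e\<^sup>2 < (norm (Z \<omega>))\<^sup>2}"
        using e by (auto intro: power_strict_mono simp: power_less_imp_less_base)
      have "emeasure M {\<omega>\<in>space M. e < norm (Z \<omega>)} \<le> (\<integral>\<^sup>+\<omega>. ennreal ((norm (Z \<omega>))\<^sup>2 / e\<^sup>2) \<partial>M)"
        unfolding setq by (rule markov1) (use Zm e in auto)
      also have "\<dots> \<le> (\<integral>\<^sup>+\<omega>. ennreal ((norm (s1 \<omega>))\<^sup>2) * ennreal c + ennreal ((norm (s2 \<omega>))\<^sup>2) * ennreal c \<partial>M)"
      proof (rule nn_integral_mono)
        fix \<omega>
        have "(norm (Z \<omega>))\<^sup>2 / e\<^sup>2 \<le> ((norm (s1 \<omega>))\<^sup>2 + (norm (s2 \<omega>))\<^sup>2) / real n / e\<^sup>2"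
          by (rule divide_right_mono[OF nb]) simp
        also have "\<dots> = (norm (s1 \<omega>))\<^sup>2 * c + (norm (s2 \<omega>))\<^sup>2 * c"
          by (simp add: c_def add_divide_distrib)
        finally have "ennreal ((norm (Z \<omega>))\<^sup>2 / e\<^sup>2) \<le> ennreal ((norm (s1 \<omega>))\<^sup>2 * c + (norm (s2 \<omega>))\<^sup>2 * c)"
          by (rule ennreal_leI)
        also have "\<dots> = ennreal ((norm (s1 \<omega>))\<^sup>2) * ennreal c + ennreal ((norm (s2 \<omega>))\<^sup>2) * ennreal c"
          using c0 by (simp add: ennreal_plus ennreal_mult)
        finally show "ennreal ((norm (Z \<omega>))\<^sup>2 / e\<^sup>2) \<le> ennreal ((norm (s1 \<omega>))\<^sup>2) * ennreal c + ennreal ((norm (s2 \<omega>))\<^sup>2) * ennreal c" .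
      qed
      also have "\<dots> = (\<integral>\<^sup>+\<omega>. ennreal ((norm (s1 \<omega>))\<^sup>2) \<partial>M) * ennreal c + (\<integral>\<^sup>+\<omega>. ennreal ((norm (s2 \<omega>))\<^sup>2) \<partial>M) * ennreal c"
        using s1m s2m by (subst nn_integral_add) (auto simp: nn_integral_multc)
      also have "\<dots> \<le> (of_nat n * (ennreal Mb * ennreal (e1 n))) * ennreal c + (of_nat n * (ennreal Mb * ennreal (e2 n))) * ennreal c"
      proof (intro add_mono mult_right_mono order.refl)
        have cS: "card (S1 n) = n" by (rule S1card)
        have cK: "card K1 = n" unfolding K1_def using S1sub[of n] S1card[of n]
          by (subst card_Diff_subset) (auto intro: finite_subset)
        have finS: "finite (S1 n)" using S1sub[of n] by (rule finite_subset) simp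
        have finK: "finite K1" unfolding K1_def by simp
        have "(\<integral>\<^sup>+\<omega>. ennreal ((norm (s1 \<omega>))\<^sup>2) \<partial>M) \<le> of_nat (card (S1 n)) * (ennreal Mb * Eg K1 (g1 n) Ups)"
          unfolding s1_def K1_def
          by (rule estD[OF g1m Upsm finS]) (use elim in auto)
        then show "(\<integral>\<^sup>+\<omega>. ennreal ((norm (s1 \<omega>))\<^sup>2) \<partial>M) \<le> of_nat n * (ennreal Mb * ennreal (e1 n))"
          using elim cS by (simp add: K1_def)
        have "(\<integral>\<^sup>+\<omega>. ennreal ((norm (s2 \<omega>))\<^sup>2) \<partial>M) \<le> of_nat (card K1) * (ennreal Mb * Eg (S1 n) (g2 n) Ups)"
          unfolding s2_def
          by (rule estD[OF g2m Upsm finK]) (use elim in \<open>auto simp: K1_def\<close>)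
        then show "(\<integral>\<^sup>+\<omega>. ennreal ((norm (s2 \<omega>))\<^sup>2) \<partial>M) \<le> of_nat n * (ennreal Mb * ennreal (e2 n))"
          using elim cK by simp
      qed simp_all
      also have "\<dots> = ennreal (B n)"
      proof -
        have "(of_nat n * (ennreal Mb * ennreal (e1 n))) * ennreal c + (of_nat n * (ennreal Mb * ennreal (e2 n))) * ennreal c
          = ennreal (real n * (m * e1 n) * c + real n * (m * e2 n) * c)"
          using m0 c0 e12_nonneg[of n]
          by (simp add: Mb_max[folded m_def] ennreal_of_nat_eq_real_of_nat ennreal_mult ennreal_plus)
        also have "real n * (m * e1 n) * c + real n * (m * e2 n) * c = B n"
          using n0 e unfolding B_def c_def by (simp add: field_simps)
        finally show ?thesis .
      qed
      finally show ?case unfolding Z_def .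
    qed
  qed
qed

end

end


context L begin

lemma master:
  fixes S1 :: "nat \<Rightarrow> nat set"
    and g1 g2 :: "nat \<Rightarrow> (nat \<Rightarrow> real \<times> (real^'d) \<times> (real^'w)) \<Rightarrow> real^('w option) \<Rightarrow> real^'k"
    and Ups :: "real^('w option) \<Rightarrow> real^'k"
  assumes S1: "\<forall>n. S1 n \<subseteq> {..<2*n} \<and> card (S1 n) = n"
    and g1m: "\<forall>n. (\<lambda>(x, z). g1 n x z) \<in> borel_measurable (PiM ({..<2*n} - S1 n) (\<lambda>_. borel) \<Otimes>\<^sub>M borel)"
    and g2m: "\<forall>n. (\<lambda>(x, z). g2 n x z) \<in> borel_measurable (PiM (S1 n) (\<lambda>_. borel) \<Otimes>\<^sub>M borel)"
    and Upsm: "Ups \<in> borel_measurable borel"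
    and E1x: "(\<lambda>n. \<integral>\<^sup>+\<omega>. (\<integral>\<^sup>+z. ennreal ((norm (g1 n (restrict (\<lambda>k. X k \<omega>) ({..<2*n} - S1 n)) z - Ups z))\<^sup>2) \<partial>distr M borel (\<lambda>\<omega>. zf (X 0 \<omega>))) \<partial>M) \<longlonglongrightarrow> 0"
    and E2x: "(\<lambda>n. \<integral>\<^sup>+\<omega>. (\<integral>\<^sup>+z. ennreal ((norm (g2 n (restrict (\<lambda>k. X k \<omega>) (S1 n)) z - Ups z))\<^sup>2) \<partial>distr M borel (\<lambda>\<omega>. zf (X 0 \<omega>))) \<partial>M) \<longlonglongrightarrow> 0"
    and Tint: "integrable M (\<lambda>\<omega>. (norm (tf (X 0 \<omega>)))\<^sup>2)"
  shows "op1 M (\<lambda>n \<omega>. (1 / real (2*n)) *\<^sub>R (\<Sum>i<2*n. outer (if i \<in> S1 n then g1 n (restrict (\<lambda>k. X k \<omega>) ({..<2*n} - S1 n)) (zf (X i \<omega>)) else g2 n (restrict (\<lambda>k. X k \<omega>) (S1 n)) (zf (X i \<omega>))) (tf (X i \<omega>)))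
                     - (1 / real (2*n)) *\<^sub>R (\<Sum>i<2*n. outer (Ups (zf (X i \<omega>))) (tf (X i \<omega>))))
       \<and> op1 M (\<lambda>n \<omega>. (1 / sqrt (real (2*n))) *\<^sub>R (\<Sum>i<2*n. uf th (X i \<omega>) *\<^sub>R (if i \<in> S1 n then g1 n (restrict (\<lambda>k. X k \<omega>) ({..<2*n} - S1 n)) (zf (X i \<omega>)) else g2 n (restrict (\<lambda>k. X k \<omega>) (S1 n)) (zf (X i \<omega>))))
                     - (1 / sqrt (real (2*n))) *\<^sub>R (\<Sum>i<2*n. uf th (X i \<omega>) *\<^sub>R Ups (zf (X i \<omega>))))"
proof -
  have S1sub: "\<And>n. S1 n \<subseteq> {..<2*n}" and S1card: "\<And>n. card (S1 n) = n" using S1 by auto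
  note g1m' = g1m[rule_format] and g2m' = g2m[rule_format]
  have E1: "(\<lambda>n. Eg ({..<2*n} - S1 n) (g1 n) Ups) \<longlonglongrightarrow> 0"
    using E1x unfolding Eg_def R_def[abs_def] PZ_def .
  have E2: "(\<lambda>n. Eg (S1 n) (g2 n) Ups) \<longlonglongrightarrow> 0"
    using E2x unfolding Eg_def R_def[abs_def] PZ_def .
  note prem = S1sub S1card g1m' g2m' Upsm E1 E2 Tint
  note c1 = claim1[OF prem]
  note c2 = claim2[OF prem]
  have Ueq: "Uh S1 g1 g2 n i \<omega> = (if i \<in> S1 n then g1 n (restrict (\<lambda>k. X k \<omega>) ({..<2*n} - S1 n)) (zf (X i \<omega>)) else g2 n (restrict (\<lambda>k. X k \<omega>) (S1 n)) (zf (X i \<omega>)))" for n i \<omega>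
    unfolding Uh_def[OF prem] R_def ..
  show ?thesis using c1 c2 unfolding Ueq by (rule conjI)
qed

end


lemma sq_le_powr:
  fixes u e :: real
  assumes "0 < e"
  shows "u\<^sup>2 \<le> 1 + \<bar>u\<bar> powr (2 + e)"
proof (cases "\<bar>u\<bar> \<le> 1")
  case True
  have "u\<^sup>2 = \<bar>u\<bar>\<^sup>2" by simp
  also have "\<dots> \<le> 1" using True by (intro power_le_one) auto
  finally show ?thesis by (smt (verit) powr_ge_zero)
next
  case False
  then have "u\<^sup>2 = \<bar>u\<bar> powr 2" by (simp add: powr_realpow[symmetric])
  also have "\<dots> \<le> \<bar>u\<bar> powr (2 + e)" using False assms by (intro powr_mono) auto
  finally show ?thesis by simp
qed

theorem lemma1:
  fixes M :: "'a measure"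
    and Y :: "nat \<Rightarrow> 'a \<Rightarrow> real"
    and D :: "nat \<Rightarrow> 'a \<Rightarrow> real^'d"
    and W :: "nat \<Rightarrow> 'a \<Rightarrow> real^'w"
    and \<theta> :: "real^('d option)"
    and S1 :: "nat \<Rightarrow> nat set"
    and g1 g2 :: "nat \<Rightarrow> (nat \<Rightarrow> real \<times> (real^'d) \<times> (real^'w)) \<Rightarrow> real^('w option) \<Rightarrow> real^'k"
    and Ups :: "real^('w option) \<Rightarrow> real^'k"
    and \<epsilon> Mb :: real
  defines "X \<equiv> \<lambda>i \<omega>. (Y i \<omega>, D i \<omega>, W i \<omega>)"
    and "T \<equiv> \<lambda>i \<omega>. aug (D i \<omega>)"
    and "Z \<equiv> \<lambda>i \<omega>. aug (W i \<omega>)"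
    and "U \<equiv> \<lambda>i \<omega>. Y i \<omega> - aug (D i \<omega>) \<bullet> \<theta>"
    and "S2 \<equiv> \<lambda>n. {..<2*n} - S1 n"
    and "Uh1 \<equiv> \<lambda>n \<omega> z. g1 n (restrict (\<lambda>i. (Y i \<omega>, D i \<omega>, W i \<omega>)) ({..<2*n} - S1 n)) z"
    and "Uh2 \<equiv> \<lambda>n \<omega> z. g2 n (restrict (\<lambda>i. (Y i \<omega>, D i \<omega>, W i \<omega>)) (S1 n)) z"
    and "Uh \<equiv> \<lambda>n i \<omega>. if i \<in> S1 n
           then g1 n (restrict (\<lambda>i. (Y i \<omega>, D i \<omega>, W i \<omega>)) ({..<2*n} - S1 n)) (aug (W i \<omega>))
           else g2 n (restrict (\<lambda>i. (Y i \<omega>, D i \<omega>, W i \<omega>)) (S1 n)) (aug (W i \<omega>))"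
    and "PZ \<equiv> distr M borel (\<lambda>\<omega>. aug (W 0 \<omega>))"
  assumes "prob_space M"
    and "\<forall>i. X i \<in> borel_measurable M"
    and "prob_space.indep_vars M (\<lambda>_. borel) X UNIV"
    and "\<forall>i. distr M borel (X i) = distr M borel (X 0)"
    and "AE \<omega> in M. real_cond_exp M (vimage_algebra (space M) (W 0) borel) (U 0) \<omega> = 0"
    and "\<forall>n. S1 n \<subseteq> {..<2*n} \<and> card (S1 n) = n"
    and "\<forall>n. (\<lambda>(x, z). g1 n x z) \<in> borel_measurable (PiM (S2 n) (\<lambda>_. borel) \<Otimes>\<^sub>M borel)"
    and "\<forall>n. (\<lambda>(x, z). g2 n x z) \<in> borel_measurable (PiM (S1 n) (\<lambda>_. borel) \<Otimes>\<^sub>M borel)"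
    and "Ups \<in> borel_measurable borel"
    and "(\<lambda>n. \<integral>\<^sup>+\<omega>. (\<integral>\<^sup>+z. ennreal ((norm (Uh1 n \<omega> z - Ups z))^2) \<partial>PZ) \<partial>M) \<longlonglongrightarrow> 0"
    and "(\<lambda>n. \<integral>\<^sup>+\<omega>. (\<integral>\<^sup>+z. ennreal ((norm (Uh2 n \<omega> z - Ups z))^2) \<partial>PZ) \<partial>M) \<longlonglongrightarrow> 0"
    and "\<epsilon> > 0"
    and "integrable M (\<lambda>\<omega>. \<bar>U 0 \<omega>\<bar> powr (2 + \<epsilon>))"
    and "integrable M (\<lambda>\<omega>. norm (U 0 \<omega> *\<^sub>R Ups (Z 0 \<omega>)) powr (2 + \<epsilon>))"
    and "integrable M (\<lambda>\<omega>. (norm (T 0 \<omega>))^2)"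
    and "integrable M (\<lambda>\<omega>. (U 0 \<omega>)^2 *\<^sub>R outer (Ups (Z 0 \<omega>)) (Ups (Z 0 \<omega>)))"
    and "AE \<omega> in M. real_cond_exp M (vimage_algebra (space M) (Z 0) borel) (\<lambda>\<omega>. (U 0 \<omega>)^2) \<omega> < Mb"
  shows "op1 M (\<lambda>n \<omega>. (1 / real (2*n)) *\<^sub>R (\<Sum>i<2*n. outer (Uh n i \<omega>) (T i \<omega>))
                     - (1 / real (2*n)) *\<^sub>R (\<Sum>i<2*n. outer (Ups (Z i \<omega>)) (T i \<omega>)))
       \<and> op1 M (\<lambda>n \<omega>. (1 / sqrt (real (2*n))) *\<^sub>R (\<Sum>i<2*n. U i \<omega> *\<^sub>R Uh n i \<omega>)
                     - (1 / sqrt (real (2*n))) *\<^sub>R (\<Sum>i<2*n. U i \<omega> *\<^sub>R Ups (Z i \<omega>)))"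
  proof -
  interpret prob_space M by (rule assms(10))
  note Xm[measurable] = assms(11)[rule_format]
  have e1: "(\<lambda>\<omega>. wf (X 0 \<omega>)) = W 0" by (simp add: X_def wf_def)
  have e2: "(\<lambda>\<omega>. uf \<theta> (X 0 \<omega>)) = U 0" by (simp add: X_def uf_def U_def)
  have e2': "(\<lambda>\<omega>. (uf \<theta> (X 0 \<omega>))\<^sup>2) = (\<lambda>\<omega>. (U 0 \<omega>)\<^sup>2)" by (simp add: X_def uf_def U_def)
  have e3: "(\<lambda>\<omega>. zf (X 0 \<omega>)) = Z 0" by (simp add: X_def zf_def Z_def)
  have U0m: "(\<lambda>\<omega>. (uf \<theta> (X 0 \<omega>))\<^sup>2) \<in> borel_measurable M" by measurable
  have U2int: "integrable M (\<lambda>\<omega>. (uf \<theta> (X 0 \<omega>))\<^sup>2)"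
  proof (rule Bochner_Integration.integrable_bound[OF _ U0m])
    show "integrable M (\<lambda>\<omega>. 1 + \<bar>U 0 \<omega>\<bar> powr (2 + \<epsilon>))"
      by (rule Bochner_Integration.integrable_add[OF _ assms(22)]) simp
    show "AE \<omega> in M. norm ((uf \<theta> (X 0 \<omega>))\<^sup>2) \<le> norm (1 + \<bar>U 0 \<omega>\<bar> powr (2 + \<epsilon>))"
    proof (rule AE_I2)
      fix \<omega>
      have "(uf \<theta> (X 0 \<omega>))\<^sup>2 = (U 0 \<omega>)\<^sup>2" using fun_cong[OF e2, of \<omega>] by simp
      also have "\<dots> \<le> 1 + \<bar>U 0 \<omega>\<bar> powr (2 + \<epsilon>)" by (rule sq_le_powr[OF assms(21)])
      finally show "norm ((uf \<theta> (X 0 \<omega>))\<^sup>2) \<le> norm (1 + \<bar>U 0 \<omega>\<bar> powr (2 + \<epsilon>))" by simp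
    qed
  qed
  have LL: "L M X \<theta> Mb"
  proof (rule L.intro[OF assms(10)], rule L_axioms.intro)
    show "\<And>i. X i \<in> borel_measurable M" by (rule assms(11)[rule_format])
    show "indep_vars (\<lambda>_. borel) X UNIV" by (rule assms(12))
    show "\<And>i. distr M borel (X i) = distr M borel (X 0)" by (rule assms(13)[rule_format])
    show "AE \<omega> in M. real_cond_exp M (vimage_algebra (space M) (\<lambda>\<omega>. wf (X 0 \<omega>)) borel) (\<lambda>\<omega>. uf \<theta> (X 0 \<omega>)) \<omega> = 0"
      unfolding e1 e2 by (rule assms(14))
    show "integrable M (\<lambda>\<omega>. (uf \<theta> (X 0 \<omega>))\<^sup>2)" by (rule U2int)
    show "AE \<omega> in M. real_cond_exp M (vimage_algebra (space M) (\<lambda>\<omega>. zf (X 0 \<omega>)) borel) (\<lambda>\<omega>. (uf \<theta> (X 0 \<omega>))\<^sup>2) \<omega> < Mb"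
      unfolding e3 e2' by (rule assms(26))
  qed
  have g1m: "\<forall>n. (\<lambda>(x, z). g1 n x z) \<in> borel_measurable (PiM ({..<2*n} - S1 n) (\<lambda>_. borel) \<Otimes>\<^sub>M borel)"
    using assms(16) unfolding S2_def .
  have E1x: "(\<lambda>n. \<integral>\<^sup>+\<omega>. (\<integral>\<^sup>+z. ennreal ((norm (g1 n (restrict (\<lambda>k. X k \<omega>) ({..<2*n} - S1 n)) z - Ups z))\<^sup>2) \<partial>distr M borel (\<lambda>\<omega>. zf (X 0 \<omega>))) \<partial>M) \<longlonglongrightarrow> 0"
    using assms(19) unfolding Uh1_def PZ_def X_def zf_def snd_conv .
  have E2x: "(\<lambda>n. \<integral>\<^sup>+\<omega>. (\<integral>\<^sup>+z. ennreal ((norm (g2 n (restrict (\<lambda>k. X k \<omega>) (S1 n)) z - Ups z))\<^sup>2) \<partial>distr M borel (\<lambda>\<omega>. zf (X 0 \<omega>))) \<partial>M) \<longlonglongrightarrow> 0"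
    using assms(20) unfolding Uh2_def PZ_def X_def zf_def snd_conv .
  have Tint: "integrable M (\<lambda>\<omega>. (norm (tf (X 0 \<omega>)))\<^sup>2)"
    using assms(24) by (simp add: T_def X_def tf_def)
  note m = L.master[OF LL assms(15) g1m assms(17) assms(18) E1x E2x Tint]
  show ?thesis
    using m unfolding X_def T_def Z_def U_def Uh_def uf_def zf_def tf_def fst_conv snd_conv .
qed

end
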